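(* For every finite group $G$, every block of the power semigroup $\mathcal{P}(G)$ divides $G$. Consequently, for every pseudovariety of groups $\mathbf{H}$, one has $\mathbf{PH}\subseteq\mathbf{BH}$.
   Context: For a finite semigroup $S$, $\mathcal{P}(S)$ is the semigroup of all subsets of $S$ under $AB=\{ab: a\in A, b\in B\}$. A semigroup $A$ divides $B$ if $A$ is a homomorphic image of a subsemigroup of $B$. Blocks: let $U$ be the union of all subgroups of a finite semigroup $S$ and let $\rho$ be the smallest equivalence relation on $U$ containing the restrictions to $U$ of Green's relations $\mathcal{L}$ and $\mathcal{R}$. A block of $S$ is the Rees quotient $T/I$, where $T$ is the subsemigroup of $S$ generated by a $\rho$-class and $I$ is the ideal of $T$ consisting of the elements of $T$ not lying in the $\mathcal{D}$-class (of $S$) of the generators. For a pseudovariety of groups $\mathbf{H}$: $\mathbf{PH}$ is the pseudovariety of semigroups generated by all $\mathcal{P}(G)$ with $G\in\mathbf{H}$, and $\mathbf{BH}$ is the class of all finite semigroups all of whose blocks belong to $\mathbf{H}$ (blocks here being regarded as members of $\mathbf{H}$ when they divide a group of $\mathbf{H}$, i.e. $\mathbf{BV}$ is the class of finite semigroups whose blocks lie in $\mathbf{V}$, for $\mathbf{V}$ the pseudovariety considered). *)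

theory Defs
  imports "HOL-Algebra.Coset"
begin

definition semigrp :: "'a set \<Rightarrow> ('a \<Rightarrow> 'a \<Rightarrow> 'a) \<Rightarrow> bool" where
  "semigrp S m \<longleftrightarrow> (\<forall>x\<in>S. \<forall>y\<in>S. m x y \<in> S) \<and>
     (\<forall>x\<in>S. \<forall>y\<in>S. \<forall>z\<in>S. m (m x y) z = m x (m y z))"

definition is_subgrp :: "'a set \<Rightarrow> ('a \<Rightarrow> 'a \<Rightarrow> 'a) \<Rightarrow> 'a set \<Rightarrow> bool" where
  "is_subgrp S m H \<longleftrightarrow> H \<subseteq> S \<and> (\<forall>x\<in>H. \<forall>y\<in>H. m x y \<in> H) \<and>
     (\<exists>e\<in>H. \<forall>x\<in>H. m e x = x \<and> m x e = x \<and> (\<exists>y\<in>H. m x y = e \<and> m y x = e))"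

definition grp_union :: "'a set \<Rightarrow> ('a \<Rightarrow> 'a \<Rightarrow> 'a) \<Rightarrow> 'a set" where
  "grp_union S m = \<Union>{H. is_subgrp S m H}"

text \<open>Green's relations (with S^1 x = {x} \<union> S x, etc.).\<close>
definition greenL :: "'a set \<Rightarrow> ('a \<Rightarrow> 'a \<Rightarrow> 'a) \<Rightarrow> 'a \<Rightarrow> 'a \<Rightarrow> bool" where
  "greenL S m x y \<longleftrightarrow> x \<in> S \<and> y \<in> S \<and>
     insert x ((\<lambda>s. m s x) ` S) = insert y ((\<lambda>s. m s y) ` S)"

definition greenR :: "'a set \<Rightarrow> ('a \<Rightarrow> 'a \<Rightarrow> 'a) \<Rightarrow> 'a \<Rightarrow> 'a \<Rightarrow> bool" where
  "greenR S m x y \<longleftrightarrow> x \<in> S \<and> y \<in> S \<and>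
     insert x ((\<lambda>s. m x s) ` S) = insert y ((\<lambda>s. m y s) ` S)"

definition greenD :: "'a set \<Rightarrow> ('a \<Rightarrow> 'a \<Rightarrow> 'a) \<Rightarrow> 'a \<Rightarrow> 'a \<Rightarrow> bool" where
  "greenD S m x y \<longleftrightarrow> (\<exists>z. greenL S m x z \<and> greenR S m z y)"

definition rho :: "'a set \<Rightarrow> ('a \<Rightarrow> 'a \<Rightarrow> 'a) \<Rightarrow> ('a \<times> 'a) set" where
  "rho S m = (Id_on (grp_union S m) \<union>
      {(x, y). x \<in> grp_union S m \<and> y \<in> grp_union S m \<and> (greenL S m x y \<or> greenR S m x y)})\<^sup>+"

inductive_set gen_subsemigrp :: "('a \<Rightarrow> 'a \<Rightarrow> 'a) \<Rightarrow> 'a set \<Rightarrow> 'a set"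
  for m :: "'a \<Rightarrow> 'a \<Rightarrow> 'a" and C :: "'a set" where
  base: "c \<in> C \<Longrightarrow> c \<in> gen_subsemigrp m C"
| mult: "x \<in> gen_subsemigrp m C \<Longrightarrow> y \<in> gen_subsemigrp m C \<Longrightarrow> m x y \<in> gen_subsemigrp m C"

definition block_ideal :: "'a set \<Rightarrow> ('a \<Rightarrow> 'a \<Rightarrow> 'a) \<Rightarrow> 'a set \<Rightarrow> 'a set" where
  "block_ideal S m C = {t \<in> gen_subsemigrp m C. \<not> (\<exists>c\<in>C. greenD S m c t)}"

text \<open>The Rees quotient T/I, with elements Some t (t \<in> T - I) and the zero None
  (present only when I is nonempty).\<close>
definition block_carrier :: "'a set \<Rightarrow> ('a \<Rightarrow> 'a \<Rightarrow> 'a) \<Rightarrow> 'a set \<Rightarrow> 'a option set" where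
  "block_carrier S m C = Some ` (gen_subsemigrp m C - block_ideal S m C) \<union>
     (if block_ideal S m C = {} then {} else {None})"

definition block_mult :: "'a set \<Rightarrow> ('a \<Rightarrow> 'a \<Rightarrow> 'a) \<Rightarrow> 'a set
    \<Rightarrow> 'a option \<Rightarrow> 'a option \<Rightarrow> 'a option" where
  "block_mult S m C a b = (case (a, b) of
      (Some x, Some y) \<Rightarrow> (if m x y \<in> block_ideal S m C then None else Some (m x y))
    | _ \<Rightarrow> None)"

text \<open>The blocks of S are the Rees quotients associated with the \<rho>-classes.\<close>
definition rho_classes :: "'a set \<Rightarrow> ('a \<Rightarrow> 'a \<Rightarrow> 'a) \<Rightarrow> 'a set set" where
  "rho_classes S m = grp_union S m // rho S m"

definition divides :: "'a set \<Rightarrow> ('a \<Rightarrow> 'a \<Rightarrow> 'a) \<Rightarrow> 'b set \<Rightarrow> ('b \<Rightarrow> 'b \<Rightarrow> 'b) \<Rightarrow> bool" where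
  "divides A mA B mB \<longleftrightarrow> (\<exists>T \<phi>. T \<subseteq> B \<and> (\<forall>x\<in>T. \<forall>y\<in>T. mB x y \<in> T) \<and>
      \<phi> ` T = A \<and> (\<forall>x\<in>T. \<forall>y\<in>T. \<phi> (mB x y) = mA (\<phi> x) (\<phi> y)))"

end

theory Submission
  imports Defs
begin

definition sg :: "('a, 'b) monoid_scheme \<Rightarrow> 'a set \<Rightarrow> 'a set" where
  "sg G X = {inv\<^bsub>G\<^esub> a \<otimes>\<^bsub>G\<^esub> b | a b. a \<in> X \<and> b \<in> X}"

definition nrm :: "('a, 'b) monoid_scheme \<Rightarrow> 'a set \<Rightarrow> 'a set" where
  "nrm G E = {g \<in> carrier G. \<forall>e\<in>E. g \<otimes>\<^bsub>G\<^esub> e \<otimes>\<^bsub>G\<^esub> inv\<^bsub>G\<^esub> g \<in> E \<and>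
     inv\<^bsub>G\<^esub> g \<otimes>\<^bsub>G\<^esub> e \<otimes>\<^bsub>G\<^esub> g \<in> E}"

context group
begin

lemma lcancel[simp]: "x \<in> carrier G \<Longrightarrow> y \<in> carrier G \<Longrightarrow> z \<in> carrier G \<Longrightarrow> (x \<otimes> y = x \<otimes> z) = (y = z)"
  by (metis Units_eq Units_l_cancel)

lemma inv_cancel1[simp]: "a \<in> carrier G \<Longrightarrow> e \<in> carrier G \<Longrightarrow> inv a \<otimes> (a \<otimes> e) = e"
  by (simp add: m_assoc[symmetric])

lemma inv_cancel2[simp]: "a \<in> carrier G \<Longrightarrow> e \<in> carrier G \<Longrightarrow> a \<otimes> (inv a \<otimes> e) = e"
  by (simp add: m_assoc[symmetric])

lemma smult_mem: "a \<in> A \<Longrightarrow> b \<in> B \<Longrightarrow> a \<otimes> b \<in> A <#> B"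
  unfolding set_mult_def by blast

lemma smult_memE: "z \<in> A <#> B \<Longrightarrow> (\<And>a b. a \<in> A \<Longrightarrow> b \<in> B \<Longrightarrow> z = a \<otimes> b \<Longrightarrow> P) \<Longrightarrow> P"
  unfolding set_mult_def by blast

lemma smult_empty[simp]: "{} <#> A = {}" "A <#> {} = {}"
  unfolding set_mult_def by auto

lemma lemA:
  assumes fin: "finite (carrier G)"
    and XU: "X \<in> grp_union (Pow (carrier G)) (set_mult G)" and ne: "X \<noteq> {}"
  shows "subgroup (sg G X) G \<and> (\<forall>x\<in>X. X = x <# sg G X \<and> X = sg G X #> x)"
proof -
  from XU obtain H where H: "is_subgrp (Pow (carrier G)) (set_mult G) H" and XH: "X \<in> H"
    unfolding grp_union_def by blast
  from H obtain e0 where e0H: "e0 \<in> H" and e0: "\<forall>x\<in>H. e0 <#> x = x \<and> x <#> e0 = x \<and>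
      (\<exists>y\<in>H. x <#> y = e0 \<and> y <#> x = e0)" and HP: "H \<subseteq> Pow (carrier G)"
    unfolding is_subgrp_def by blast
  have e0G: "e0 \<subseteq> carrier G" using e0H HP by blast
  have XG: "X \<subseteq> carrier G" using XH HP by blast
  have ee: "e0 <#> e0 = e0" using e0 e0H by blast
  have e0X: "e0 <#> X = X" and Xe0: "X <#> e0 = X" using e0 XH by blast+
  obtain Y where YH: "Y \<in> H" and XY: "X <#> Y = e0" and YX: "Y <#> X = e0" using e0 XH by blast
  have YG: "Y \<subseteq> carrier G" using YH HP by blast
  have e0ne: "e0 \<noteq> {}" using e0X ne by auto
  have cl: "a \<otimes> b \<in> e0" if "a \<in> e0" "b \<in> e0" for a b
    using smult_mem[OF that] ee by simp
  have finE: "finite e0" using fin e0G finite_subset by blast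
  have surj: "(\<lambda>x. a \<otimes> x) ` e0 = e0" if a: "a \<in> e0" for a
  proof (rule endo_inj_surj[OF finE])
    show "(\<lambda>x. a \<otimes> x) ` e0 \<subseteq> e0" using cl a by blast
    show "inj_on (\<lambda>x. a \<otimes> x) e0" using a e0G unfolding inj_on_def by (metis lcancel subsetD)
  qed
  have one: "\<one> \<in> e0"
  proof -
    obtain a where a: "a \<in> e0" using e0ne by blast
    then have "a \<in> (\<lambda>x. a \<otimes> x) ` e0" using surj by simp
    then obtain x where x: "x \<in> e0" "a = a \<otimes> x" by blast
    then have "a \<otimes> x = a \<otimes> \<one>" using a e0G by auto
    then have "x = \<one>" using x a e0G by (meson lcancel one_closed subsetD)
    then show ?thesis using x by simp
  qed
  have inv: "inv a \<in> e0" if a: "a \<in> e0" for a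
  proof -
    have "\<one> \<in> (\<lambda>x. a \<otimes> x) ` e0" using surj[OF a] one by simp
    then obtain x where x: "x \<in> e0" "\<one> = a \<otimes> x" by blast
    then have "a \<otimes> x = a \<otimes> inv a" using a e0G by auto
    then have "x = inv a" using x a e0G by (meson lcancel inv_closed subsetD)
    then show ?thesis using x by simp
  qed
  have sub: "subgroup e0 G" by (rule subgroupI[OF e0G e0ne inv cl])
  obtain y where y: "y \<in> Y" using YX e0ne by (metis ex_in_conv smult_empty(1))
  obtain x0 where x0: "x0 \<in> X" using ne by blast
  have yG: "y \<in> carrier G" using y YG by blast
  have cos: "X = x <# e0 \<and> X = e0 #> x" if x: "x \<in> X" for x
  proof
    have xG: "x \<in> carrier G" using x XG by blast
    show "X = x <# e0"
    proof
      show "x <# e0 \<subseteq> X" unfolding l_coset_def using smult_mem[OF x] Xe0 by blast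
      show "X \<subseteq> x <# e0"
      proof
        fix x' assume x': "x' \<in> X"
        have x'G: "x' \<in> carrier G" using x' XG by blast
        have "y \<otimes> x \<in> e0" "y \<otimes> x' \<in> e0" using smult_mem[OF y] x x' YX by auto
        then have "inv (y \<otimes> x) \<otimes> (y \<otimes> x') \<in> e0" using inv cl by blast
        also have "inv (y \<otimes> x) \<otimes> (y \<otimes> x') = inv x \<otimes> x'"
          using xG x'G yG by (simp add: inv_mult_group m_assoc[symmetric])
            (simp add: m_assoc)
        finally have "inv x \<otimes> x' \<in> e0" .
        moreover have "x' = x \<otimes> (inv x \<otimes> x')" using xG x'G by (simp add: m_assoc[symmetric])
        ultimately show "x' \<in> x <# e0" unfolding l_coset_def by blast
      qed
    qed
    show "X = e0 #> x"
    proof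
      show "e0 #> x \<subseteq> X" unfolding r_coset_def using smult_mem[OF _ x] e0X by blast
      show "X \<subseteq> e0 #> x"
      proof
        fix x' assume x': "x' \<in> X"
        have x'G: "x' \<in> carrier G" using x' XG by blast
        have "x \<otimes> y \<in> e0" "x' \<otimes> y \<in> e0" using smult_mem[OF _ y] x x' XY by auto
        then have "(x' \<otimes> y) \<otimes> inv (x \<otimes> y) \<in> e0" using inv cl by blast
        also have "(x' \<otimes> y) \<otimes> inv (x \<otimes> y) = x' \<otimes> inv x"
          using xG x'G yG by (simp add: inv_mult_group m_assoc[symmetric])
            (simp add: m_assoc)
        finally have "x' \<otimes> inv x \<in> e0" .
        moreover have "x' = (x' \<otimes> inv x) \<otimes> x" using xG x'G by (simp add: m_assoc)
        ultimately show "x' \<in> e0 #> x" unfolding r_coset_def by blast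
      qed
    qed
  qed
  have sgE: "sg G X = e0"
  proof
    show "sg G X \<subseteq> e0"
    proof
      fix z assume "z \<in> sg G X"
      then obtain a b where ab: "a \<in> X" "b \<in> X" "z = inv a \<otimes> b" unfolding sg_def by blast
      then have "b \<in> a <# e0" using cos by blast
      then obtain e where e: "e \<in> e0" "b = a \<otimes> e" unfolding l_coset_def by blast
      have "a \<in> carrier G" "e \<in> carrier G" using ab e XG e0G by blast+
      then have "z = e" using ab e by simp
      then show "z \<in> e0" using e by simp
    qed
    show "e0 \<subseteq> sg G X"
    proof
      fix e assume e: "e \<in> e0"
      have "x0 \<otimes> e \<in> X" using smult_mem[OF x0 e] Xe0 by simp
      moreover have "e = inv x0 \<otimes> (x0 \<otimes> e)" using x0 e XG e0G by (simp add: subset_iff)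
      ultimately show "e \<in> sg G X" using x0 unfolding sg_def by blast
    qed
  qed
  show ?thesis using sub cos sgE by simp
qed

abbreviation "UU \<equiv> grp_union (Pow (carrier G)) (set_mult G)"

lemma U_sub: "X \<in> UU \<Longrightarrow> X \<subseteq> carrier G"
  unfolding grp_union_def is_subgrp_def by blast

lemma sg_sub: "X \<subseteq> carrier G \<Longrightarrow> sg G X \<subseteq> carrier G"
  unfolding sg_def by blast

lemma sg_empty_iff: "X \<subseteq> carrier G \<Longrightarrow> sg G X = {} \<longleftrightarrow> X = {}"
proof
  assume "X \<subseteq> carrier G" "sg G X = {}"
  then show "X = {}" unfolding sg_def by blast
qed (auto simp: sg_def)

lemma memR:
  assumes fin: "finite (carrier G)" and "X \<in> UU" "x \<in> X" "e \<in> sg G X"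
  shows "x \<otimes> e \<in> X" "e \<otimes> x \<in> X"
proof -
  have "X \<noteq> {}" using assms by blast
  then have "X = x <# sg G X \<and> X = sg G X #> x" using lemA[OF fin] assms by blast
  then show "x \<otimes> e \<in> X" "e \<otimes> x \<in> X" using assms(4) unfolding l_coset_def r_coset_def by blast+
qed

lemma invR:
  assumes fin: "finite (carrier G)" and X: "X \<in> UU" and ab: "a \<in> X" "b \<in> X"
  shows "b \<otimes> inv a \<in> sg G X"
proof -
  have "X \<noteq> {}" using ab by blast
  then have "X = sg G X #> a" using lemA[OF fin X] ab by blast
  then obtain e where e: "e \<in> sg G X" "b = e \<otimes> a" using ab unfolding r_coset_def by blast
  have "e \<in> carrier G" "a \<in> carrier G" using e ab sg_sub U_sub[OF X] by blast+
  then have "b \<otimes> inv a = e" using e by (simp add: m_assoc)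
  then show ?thesis using e by simp
qed

lemma Lsub:
  assumes fin: "finite (carrier G)" and Y: "Y \<in> UU" and A: "A \<subseteq> carrier G"
    and XA: "X = A <#> Y" and ne: "X \<noteq> {}"
  shows "sg G Y \<subseteq> sg G X"
proof
  fix e assume e: "e \<in> sg G Y"
  obtain x where x: "x \<in> X" using ne by blast
  then obtain a y where ay: "a \<in> A" "y \<in> Y" "x = a \<otimes> y" using XA smult_memE by metis
  have ye: "y \<otimes> e \<in> Y" using memR[OF fin Y ay(2) e] by simp
  have G: "a \<in> carrier G" "y \<in> carrier G" "e \<in> carrier G"
    using ay A U_sub[OF Y] sg_sub[OF U_sub[OF Y]] e by blast+
  have "x \<otimes> e = a \<otimes> (y \<otimes> e)" using ay G by (simp add: m_assoc)
  then have xe: "x \<otimes> e \<in> X" using smult_mem[OF ay(1) ye] XA by simp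
  have "e = inv x \<otimes> (x \<otimes> e)" using G ay by simp
  then show "e \<in> sg G X" using x xe unfolding sg_def by blast
qed

lemma Rsub:
  assumes fin: "finite (carrier G)" and X: "X \<in> UU" and Y: "Y \<in> UU" and A: "A \<subseteq> carrier G"
    and XA: "X = Y <#> A" and ne: "X \<noteq> {}"
  shows "sg G Y \<subseteq> sg G X"
proof
  fix e assume e: "e \<in> sg G Y"
  obtain x where x: "x \<in> X" using ne by blast
  then obtain a y where ay: "y \<in> Y" "a \<in> A" "x = y \<otimes> a" using XA smult_memE by metis
  have ye: "e \<otimes> y \<in> Y" using memR[OF fin Y ay(1) e] by simp
  have G: "a \<in> carrier G" "y \<in> carrier G" "e \<in> carrier G"
    using ay A U_sub[OF Y] sg_sub[OF U_sub[OF Y]] e by blast+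
  have "e \<otimes> x = (e \<otimes> y) \<otimes> a" using ay G by (simp add: m_assoc)
  then have xe: "e \<otimes> x \<in> X" using smult_mem[OF ye ay(2)] XA by simp
  have "e = (e \<otimes> x) \<otimes> inv x" using G ay by (simp add: m_assoc)
  then show "e \<in> sg G X" using invR[OF fin X x xe] by simp
qed

lemma base_rel:
  assumes fin: "finite (carrier G)"
    and XY: "(X, Y) \<in> Id_on UU \<union> {(x, y). x \<in> UU \<and> y \<in> UU \<and>
        (greenL (Pow (carrier G)) (set_mult G) x y \<or> greenR (Pow (carrier G)) (set_mult G) x y)}"
  shows "X \<in> UU \<and> Y \<in> UU \<and> sg G X = sg G Y"
proof (cases "(X, Y) \<in> Id_on UU")
  case True then show ?thesis by (auto simp: Id_on_def)
next
  case False
  then have XU: "X \<in> UU" and YU: "Y \<in> UU" and gr: "greenL (Pow (carrier G)) (set_mult G) X Y \<or>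
      greenR (Pow (carrier G)) (set_mult G) X Y" using XY by auto
  show ?thesis
  proof (cases "X = Y")
    case True then show ?thesis using XU by simp
  next
    case neq: False
    show ?thesis
    proof (cases "greenL (Pow (carrier G)) (set_mult G) X Y")
      case True
      then have eq: "insert X ((\<lambda>s. s <#> X) ` Pow (carrier G)) = insert Y ((\<lambda>s. s <#> Y) ` Pow (carrier G))"
        unfolding greenL_def by blast
      have "X \<in> (\<lambda>s. s <#> Y) ` Pow (carrier G)" using neq eq by (metis insertI1 insertE)
      then obtain A where A: "A \<subseteq> carrier G" "X = A <#> Y" by blast
      have "Y \<in> (\<lambda>s. s <#> X) ` Pow (carrier G)" using neq eq by (metis insertI1 insertE)
      then obtain B where B: "B \<subseteq> carrier G" "Y = B <#> X" by blast
      show ?thesis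
      proof (cases "X = {}")
        case True then show ?thesis using B neq by simp
      next
        case False
        then have "Y \<noteq> {}" using A by auto
        then show ?thesis using Lsub[OF fin YU A False] Lsub[OF fin XU B] False XU YU by blast
      qed
    next
      case False
      then have "greenR (Pow (carrier G)) (set_mult G) X Y" using gr by simp
      then have eq: "insert X ((\<lambda>s. X <#> s) ` Pow (carrier G)) = insert Y ((\<lambda>s. Y <#> s) ` Pow (carrier G))"
        unfolding greenR_def by blast
      have "X \<in> (\<lambda>s. Y <#> s) ` Pow (carrier G)" using neq eq by (metis insertI1 insertE)
      then obtain A where A: "A \<subseteq> carrier G" "X = Y <#> A" by blast
      have "Y \<in> (\<lambda>s. X <#> s) ` Pow (carrier G)" using neq eq by (metis insertI1 insertE)
      then obtain B where B: "B \<subseteq> carrier G" "Y = X <#> B" by blast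
      show ?thesis
      proof (cases "X = {}")
        case True then show ?thesis using B neq by simp
      next
        case False
        then have "Y \<noteq> {}" using A by auto
        then show ?thesis using Rsub[OF fin XU YU A False] Rsub[OF fin YU XU B] False XU YU by blast
      qed
    qed
  qed
qed

lemma rho_inv:
  assumes fin: "finite (carrier G)" and XY: "(X, Y) \<in> rho (Pow (carrier G)) (set_mult G)"
  shows "X \<in> UU \<and> Y \<in> UU \<and> sg G X = sg G Y"
  using XY unfolding rho_def
proof (induction rule: trancl_induct)
  case (base y) show ?case by (rule base_rel[OF fin base])
next
  case (step y z)
  have "y \<in> UU \<and> z \<in> UU \<and> sg G y = sg G z" by (rule base_rel[OF fin step(2)])
  with step.IH show ?case by simp
qed

lemma lcos_sub: "g \<in> carrier G \<Longrightarrow> E \<subseteq> carrier G \<Longrightarrow> g <# E \<subseteq> carrier G"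
  unfolding l_coset_def by auto

lemma nrm_mult:
  assumes E: "subgroup E G" and g: "g \<in> nrm G E" and h: "h \<in> nrm G E"
  shows "g \<otimes> h \<in> nrm G E"
proof -
  have gG: "g \<in> carrier G" and hG: "h \<in> carrier G" using g h unfolding nrm_def by auto
  have EG: "E \<subseteq> carrier G" using E subgroup.subset by blast
  have "g \<otimes> h \<otimes> e \<otimes> inv (g \<otimes> h) \<in> E \<and> inv (g \<otimes> h) \<otimes> e \<otimes> (g \<otimes> h) \<in> E" if e: "e \<in> E" for e
  proof
    have eG: "e \<in> carrier G" using e EG by blast
    have 1: "h \<otimes> e \<otimes> inv h \<in> E" using h e unfolding nrm_def by blast
    then have "g \<otimes> (h \<otimes> e \<otimes> inv h) \<otimes> inv g \<in> E" using g unfolding nrm_def by blast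
    moreover have "g \<otimes> (h \<otimes> e \<otimes> inv h) \<otimes> inv g = g \<otimes> h \<otimes> e \<otimes> inv (g \<otimes> h)"
      using gG hG eG by (simp add: m_assoc inv_mult_group)
    ultimately show "g \<otimes> h \<otimes> e \<otimes> inv (g \<otimes> h) \<in> E" by simp
    have 2: "inv g \<otimes> e \<otimes> g \<in> E" using g e unfolding nrm_def by blast
    then have "inv h \<otimes> (inv g \<otimes> e \<otimes> g) \<otimes> h \<in> E" using h unfolding nrm_def by blast
    moreover have "inv h \<otimes> (inv g \<otimes> e \<otimes> g) \<otimes> h = inv (g \<otimes> h) \<otimes> e \<otimes> (g \<otimes> h)"
      using gG hG eG by (simp add: m_assoc inv_mult_group)
    ultimately show "inv (g \<otimes> h) \<otimes> e \<otimes> (g \<otimes> h) \<in> E" by simp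
  qed
  then show ?thesis using gG hG unfolding nrm_def by auto
qed

lemma nrm_inv:
  assumes g: "g \<in> nrm G E"
  shows "inv g \<in> nrm G E"
proof -
  have gG: "g \<in> carrier G" using g unfolding nrm_def by blast
  have "inv g \<otimes> e \<otimes> inv (inv g) \<in> E \<and> inv (inv g) \<otimes> e \<otimes> inv g \<in> E" if e: "e \<in> E" for e
  proof -
    have "g \<otimes> e \<otimes> inv g \<in> E \<and> inv g \<otimes> e \<otimes> g \<in> E" using g e unfolding nrm_def by blast
    then show ?thesis using gG by (simp only: inv_inv)
  qed
  then show ?thesis using gG unfolding nrm_def by (simp only: inv_closed mem_Collect_eq) blast
qed

lemma nrm_prod:
  assumes E: "subgroup E G" and g: "g \<in> nrm G E" and h: "h \<in> nrm G E"
  shows "(g <# E) <#> (h <# E) = (g \<otimes> h) <# E"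
proof -
  have gG: "g \<in> carrier G" and hG: "h \<in> carrier G" using g h unfolding nrm_def by auto
  have EG: "E \<subseteq> carrier G" using E subgroup.subset by blast
  show ?thesis
  proof
    show "(g <# E) <#> (h <# E) \<subseteq> (g \<otimes> h) <# E"
    proof
      fix z assume "z \<in> (g <# E) <#> (h <# E)"
      then obtain a b where ab: "a \<in> g <# E" "b \<in> h <# E" "z = a \<otimes> b" by (rule smult_memE)
      obtain e1 where e1: "e1 \<in> E" "a = g \<otimes> e1" using ab(1) unfolding l_coset_def by blast
      obtain e2 where e2: "e2 \<in> E" "b = h \<otimes> e2" using ab(2) unfolding l_coset_def by blast
      have e: "e1 \<in> E" "e2 \<in> E" "z = (g \<otimes> e1) \<otimes> (h \<otimes> e2)" using ab e1 e2 by simp_all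
      have eG: "e1 \<in> carrier G" "e2 \<in> carrier G" using e EG by blast+
      have e1': "inv h \<otimes> e1 \<otimes> h \<in> E" using h e unfolding nrm_def by blast
      have E2: "(inv h \<otimes> e1 \<otimes> h) \<otimes> e2 \<in> E" by (rule subgroup.m_closed[OF E e1' e(2)])
      have "z = (g \<otimes> h) \<otimes> ((inv h \<otimes> e1 \<otimes> h) \<otimes> e2)" using e(3) gG hG eG by (simp add: m_assoc)
      then show "z \<in> (g \<otimes> h) <# E" using E2 unfolding l_coset_def by blast
    qed
    show "(g \<otimes> h) <# E \<subseteq> (g <# E) <#> (h <# E)"
    proof
      fix z assume "z \<in> (g \<otimes> h) <# E"
      then obtain e where e: "e \<in> E" "z = (g \<otimes> h) \<otimes> e" unfolding l_coset_def by blast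
      have "\<one> \<in> E" using E subgroup.one_closed by blast
      then have "g \<otimes> \<one> \<in> g <# E" "h \<otimes> e \<in> h <# E" using e unfolding l_coset_def by blast+
      moreover have "z = (g \<otimes> \<one>) \<otimes> (h \<otimes> e)"
      proof -
        have "e \<in> carrier G" using e EG by blast
        then show ?thesis using e gG hG by (simp add: m_assoc)
      qed
      ultimately show "z \<in> (g <# E) <#> (h <# E)" using smult_mem by simp
    qed
  qed
qed

lemma in_nrm:
  assumes fin: "finite (carrier G)" and Y: "Y \<in> UU" and y: "y \<in> Y"
  shows "y \<in> nrm G (sg G Y) \<and> Y = y <# sg G Y"
proof -
  have YG: "Y \<subseteq> carrier G" using U_sub[OF Y] .
  have yG: "y \<in> carrier G" using y YG by blast
  have "Y = y <# sg G Y" using lemA[OF fin Y] y by blast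
  moreover have "y \<otimes> e \<otimes> inv y \<in> sg G Y \<and> inv y \<otimes> e \<otimes> y \<in> sg G Y" if e: "e \<in> sg G Y" for e
  proof
    have eG: "e \<in> carrier G" using e sg_sub[OF YG] by blast
    show "y \<otimes> e \<otimes> inv y \<in> sg G Y" using invR[OF fin Y y memR(1)[OF fin Y y e]] .
    have "inv y \<otimes> (e \<otimes> y) \<in> sg G Y" using memR(2)[OF fin Y y e] y unfolding sg_def by blast
    then show "inv y \<otimes> e \<otimes> y \<in> sg G Y" using eG yG by (simp add: m_assoc)
  qed
  ultimately show ?thesis using yG unfolding nrm_def by blast
qed

lemma greenR_half:
  assumes c: "c \<subseteq> carrier G" and t: "t \<subseteq> carrier G" and s1: "s1 \<subseteq> carrier G"
    and cs: "c = t <#> s1"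
  shows "insert c ((\<lambda>s. c <#> s) ` Pow (carrier G)) \<subseteq> insert t ((\<lambda>s. t <#> s) ` Pow (carrier G))"
proof
  fix z assume "z \<in> insert c ((\<lambda>s. c <#> s) ` Pow (carrier G))"
  then consider "z = c" | s where "s \<subseteq> carrier G" "z = c <#> s" by blast
  then show "z \<in> insert t ((\<lambda>s. t <#> s) ` Pow (carrier G))"
  proof cases
    case 1 then show ?thesis using cs s1 by blast
  next
    case (2 s)
    then have "z = t <#> (s1 <#> s)" using cs set_mult_assoc[OF t s1 2(1)] by simp
    moreover have "s1 <#> s \<subseteq> carrier G" using setmult_subset_G[OF s1 2(1)] .
    ultimately show ?thesis by blast
  qed
qed

lemma greenR_of:
  assumes c: "c \<subseteq> carrier G" and t: "t \<subseteq> carrier G" and s1: "s1 \<subseteq> carrier G"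
    and s2: "s2 \<subseteq> carrier G" and cs: "c = t <#> s1" and ts: "t = c <#> s2"
  shows "greenR (Pow (carrier G)) (set_mult G) c t"
  unfolding greenR_def using greenR_half[OF c t s1 cs] greenR_half[OF t c s2 ts] c t by blast

lemma greenR_Q:
  assumes E: "subgroup E G" and g: "g \<in> nrm G E" and h: "h \<in> nrm G E"
  shows "greenR (Pow (carrier G)) (set_mult G) (g <# E) (h <# E)"
proof -
  have gG: "g \<in> carrier G" and hG: "h \<in> carrier G" using g h unfolding nrm_def by auto
  have EG: "E \<subseteq> carrier G" using E subgroup.subset by blast
  have n1: "inv h \<otimes> g \<in> nrm G E" using nrm_mult[OF E nrm_inv[OF h] g] .
  have n2: "inv g \<otimes> h \<in> nrm G E" using nrm_mult[OF E nrm_inv[OF g] h] .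
  have 1: "g <# E = (h <# E) <#> ((inv h \<otimes> g) <# E)"
    using nrm_prod[OF E h n1] gG hG by simp
  have 2: "h <# E = (g <# E) <#> ((inv g \<otimes> h) <# E)"
    using nrm_prod[OF E g n2] gG hG by simp
  show ?thesis
    by (rule greenR_of[OF lcos_sub[OF gG EG] lcos_sub[OF hG EG] lcos_sub[OF _ EG] lcos_sub[OF _ EG] 1 2])
      (use gG hG in auto)
qed


lemma main_aux:
  assumes fin: "finite (carrier G)"
  shows "\<forall>C \<in> rho_classes (Pow (carrier G)) (set_mult G).
           divides (block_carrier (Pow (carrier G)) (set_mult G) C)
                   (block_mult (Pow (carrier G)) (set_mult G) C)
                   (carrier G) (mult G)"
proof
  let ?S = "Pow (carrier G)"
  let ?m = "set_mult G"
  fix C assume "C \<in> rho_classes ?S ?m"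
  then obtain X0 where X0U: "X0 \<in> UU" and Cdef: "C = rho ?S ?m `` {X0}"
    unfolding rho_classes_def quotient_def by blast
  have X0C: "X0 \<in> C" using X0U unfolding Cdef rho_def by (auto intro!: r_into_trancl)
  have Cinv: "Y \<in> UU \<and> sg G Y = sg G X0" if "Y \<in> C" for Y
    using rho_inv[OF fin, of X0 Y] that unfolding Cdef by auto
  show "divides (block_carrier ?S ?m C) (block_mult ?S ?m C) (carrier G) (mult G)"
  proof (cases "X0 = {}")
    case True
    have sg0: "sg G {} = {}" unfolding sg_def by simp
    have CE: "C = {{}}"
    proof -
      have "Y = {}" if "Y \<in> C" for Y
        using Cinv[OF that] sg_empty_iff[OF U_sub[of Y]] True sg0 by auto
      then show ?thesis using X0C True by blast
    qed
    have genE: "gen_subsemigrp ?m C = {{}}"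
    proof
      show "gen_subsemigrp ?m C \<subseteq> {{}}"
      proof
        fix t assume "t \<in> gen_subsemigrp ?m C"
        then show "t \<in> {{}}"
        proof induction
          case (base c) then show ?case using CE by simp
        next
          case (mult x y) then have "x = {}" "y = {}" by simp_all
          then show ?case by simp
        qed
      qed
      have "{} \<in> gen_subsemigrp ?m C" by (rule gen_subsemigrp.base) (simp add: CE)
      then show "{{}} \<subseteq> gen_subsemigrp ?m C" by simp
    qed
    have gL: "greenL ?S ?m {} {}" unfolding greenL_def by simp
    have gR: "greenR ?S ?m {} {}" unfolding greenR_def by simp
    have gD: "greenD ?S ?m {} {}" unfolding greenD_def using gL gR by blast
    have IE: "block_ideal ?S ?m C = {}"
      unfolding block_ideal_def genE using gD CE by simp
    have BC: "block_carrier ?S ?m C = {Some {}}"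
      unfolding block_carrier_def IE genE by simp
    have BM: "block_mult ?S ?m C (Some {}) (Some {}) = Some {}"
      unfolding block_mult_def IE by simp
    show ?thesis unfolding divides_def BC
    proof (intro exI[of _ "{\<one>}"] exI[of _ "\<lambda>_. Some {}"] conjI)
      show "{\<one>} \<subseteq> carrier G" by simp
      show "\<forall>x\<in>{\<one>}. \<forall>y\<in>{\<one>}. x \<otimes> y \<in> {\<one>}" by simp
      show "(\<lambda>_. Some {}) ` {\<one>} = {Some {}}" by simp
      show "\<forall>x\<in>{\<one>}. \<forall>y\<in>{\<one>}. (\<lambda>_. Some {}) (x \<otimes> y) =
          block_mult ?S ?m C ((\<lambda>_. Some {}) x) ((\<lambda>_. Some {}) y)" using BM by simp
    qed
  next
    case False
    define E where "E = sg G X0"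
    have Esub: "subgroup E G" using lemA[OF fin X0U False] unfolding E_def by blast
    have EG: "E \<subseteq> carrier G" using Esub subgroup.subset by blast
    have Ene: "E \<noteq> {}" using sg_empty_iff[OF U_sub[OF X0U]] False unfolding E_def by simp
    define Q where "Q = (\<lambda>g. g <# E) ` nrm G E"
    have CQ: "C \<subseteq> Q"
    proof
      fix Y assume Y: "Y \<in> C"
      then have YU: "Y \<in> UU" and sgY: "sg G Y = E" using Cinv unfolding E_def by auto
      have "Y \<noteq> {}" using sg_empty_iff[OF U_sub[OF YU]] sgY Ene by simp
      then obtain y where "y \<in> Y" by blast
      then have "y \<in> nrm G E \<and> Y = y <# E" using in_nrm[OF fin YU] sgY by simp
      then show "Y \<in> Q" unfolding Q_def by blast
    qed
    have TQ: "gen_subsemigrp ?m C \<subseteq> Q"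
    proof
      fix t assume "t \<in> gen_subsemigrp ?m C"
      then show "t \<in> Q"
      proof induction
        case (base c) then show ?case using CQ by blast
      next
        case (mult x y)
        then obtain g h where "g \<in> nrm G E" "h \<in> nrm G E" "x = g <# E" "y = h <# E"
          unfolding Q_def by blast
        then show ?case unfolding Q_def using nrm_prod[OF Esub] nrm_mult[OF Esub] by auto
      qed
    qed
    have IE: "block_ideal ?S ?m C = {}"
    proof -
      have "greenD ?S ?m X0 t" if t: "t \<in> gen_subsemigrp ?m C" for t
      proof -
        obtain g h where gh: "g \<in> nrm G E" "h \<in> nrm G E" "X0 = g <# E" "t = h <# E"
          using t TQ X0C CQ unfolding Q_def by blast
        have "greenR ?S ?m X0 t" using greenR_Q[OF Esub gh(1,2)] gh(3,4) by simp
        moreover have "greenL ?S ?m X0 X0" using U_sub[OF X0U] unfolding greenL_def by blast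
        ultimately show ?thesis unfolding greenD_def by blast
      qed
      then show ?thesis unfolding block_ideal_def using X0C by blast
    qed
    let ?T = "gen_subsemigrp ?m C"
    have BC: "block_carrier ?S ?m C = Some ` ?T"
      unfolding block_carrier_def IE by simp
    have BM: "block_mult ?S ?m C (Some a) (Some b) = Some (a <#> b)" for a b
      unfolding block_mult_def IE by simp
    define T' where "T' = {g \<in> nrm G E. g <# E \<in> ?T}"
    show ?thesis unfolding divides_def BC
    proof (intro exI[of _ T'] exI[of _ "\<lambda>g. Some (g <# E)"] conjI ballI)
      show "T' \<subseteq> carrier G" unfolding T'_def nrm_def by blast
    next
      fix x y assume "x \<in> T'" "y \<in> T'"
      then have x: "x \<in> nrm G E" "x <# E \<in> ?T" and y: "y \<in> nrm G E" "y <# E \<in> ?T"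
        unfolding T'_def by auto
      have "(x <# E) <#> (y <# E) \<in> ?T" using gen_subsemigrp.mult[OF x(2) y(2)] .
      then show "x \<otimes> y \<in> T'" using nrm_prod[OF Esub x(1) y(1)] nrm_mult[OF Esub x(1) y(1)]
        unfolding T'_def by simp
    next
      fix x y assume "x \<in> T'" "y \<in> T'"
      then have x: "x \<in> nrm G E" and y: "y \<in> nrm G E" unfolding T'_def by auto
      show "Some ((x \<otimes> y) <# E) = block_mult ?S ?m C (Some (x <# E)) (Some (y <# E))"
        using BM nrm_prod[OF Esub x y] by simp
    next
      show "(\<lambda>g. Some (g <# E)) ` T' = Some ` ?T"
      proof
        show "(\<lambda>g. Some (g <# E)) ` T' \<subseteq> Some ` ?T" unfolding T'_def by blast
        show "Some ` ?T \<subseteq> (\<lambda>g. Some (g <# E)) ` T'"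
        proof
          fix z assume "z \<in> Some ` ?T"
          then obtain t where t: "t \<in> ?T" "z = Some t" by blast
          then obtain g where "g \<in> nrm G E" "t = g <# E" using TQ unfolding Q_def by blast
          then show "z \<in> (\<lambda>g. Some (g <# E)) ` T'" using t unfolding T'_def by blast
        qed
      qed
    qed
  qed
qed

end

theorem mainTheorem2:
  fixes G :: "('a, 'b) monoid_scheme"
  assumes "group G" and "finite (carrier G)"
  shows "\<forall>C \<in> rho_classes (Pow (carrier G)) (set_mult G).
           divides (block_carrier (Pow (carrier G)) (set_mult G) C)
                   (block_mult (Pow (carrier G)) (set_mult G) C)
                   (carrier G) (mult G)"
  using group.main_aux[OF assms] .

end
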